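(* Let $A$ be a C*-algebra and $\mathcal H$ a countably generated Hilbert $A$-module with an orthogonal Hilbert basis $\{f_j : j\in\mathbb J\}$. Let $P,Q\in\mathrm{End}_A^*(\mathcal H)$ be orthogonal projections, $\mathcal M=P(\mathcal H)$, $\mathcal N=Q(\mathcal H)$, and suppose that $\{x_j=P(f_j) : j\in\mathbb J\}$ and $\{y_j=Q(f_j) : j\in\mathbb J\}$ are standard normalized tight frames for $\mathcal M$ and $\mathcal N$, respectively. Then the following are equivalent: (a) the frames $\{x_j\}$ and $\{y_j\}$ are similar; (b) they are unitarily equivalent; (c) $P=Q$ and $x_j=y_j$ for every $j\in\mathbb J$.
   Context: A (left) Hilbert $A$-module is a left $A$-module $\mathcal H$ with an $A$-valued inner product $\langle\cdot,\cdot\rangle$, $A$-linear in the first argument, with $\langle x,y\rangle=\langle y,x\rangle^*$, $\langle x,x\rangle\ge0$ and $=0$ only for $x=0$, complete in $\|x\|=\|\langle x,x\rangle\|^{1/2}$. Countably generated: some countable subset has norm-dense $A$-linear span. $\mathrm{End}_A^*(\mathcal H)$ is the C*-algebra of adjointable bounded $A$-linear operators on $\mathcal H$. A Hilbert basis is a set with norm-dense $A$-linear span such that an $A$-linear combination $\sum_{j\in S}a_jx_j$ is zero iff each $a_jx_j$ is zero, and $\|x_j\|=1$; orthogonal means $\langle f_i,f_j\rangle=0$ for $i\ne j$. A sequence $\{x_j\}$ is a normalized tight frame if $\langle x,x\rangle=\sum_j\langle x,x_j\rangle\langle x_j,x\rangle$ for all $x$; standard if this series converges in norm for all $x$. Frames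 $\{x_j\}$ of $\mathcal M$ and $\{y_j\}$ of $\mathcal N$ (same index set) are similar if there is an invertible adjointable bounded $A$-linear $T:\mathcal M\to\mathcal N$ with $T(x_j)=y_j$ for all $j$, and unitarily equivalent if $T$ can be chosen unitary (inner-product preserving and surjective). *)

theory Defs
  imports "HOL-Analysis.Analysis"
begin

text \<open>The underlying real Banach algebra structure of a C*-algebra is the type class
  structure of the carrier type; the complex scalar multiplication and the involution
  are explicit operations.  The algebra need not be unital.\<close>

record 'a cstar_ops =
  csc :: "complex \<Rightarrow> 'a \<Rightarrow> 'a"
  invol :: "'a \<Rightarrow> 'a"

definition cstar_algebra :: "('a::{real_normed_algebra, banach}) cstar_ops \<Rightarrow> bool" where
  "cstar_algebra A \<longleftrightarrow>
     (\<forall>c d a. csc A (c + d) a = csc A c a + csc A d a) \<and>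
     (\<forall>c a b. csc A c (a + b) = csc A c a + csc A c b) \<and>
     (\<forall>c d a. csc A (c * d) a = csc A c (csc A d a)) \<and>
     (\<forall>r a. csc A (complex_of_real r) a = scaleR r a) \<and>
     (\<forall>c a. norm (csc A c a) = cmod c * norm a) \<and>
     (\<forall>c a b. csc A c (a * b) = csc A c a * b) \<and>
     (\<forall>c a b. csc A c (a * b) = a * csc A c b) \<and>
     (\<forall>a b. invol A (a + b) = invol A a + invol A b) \<and>
     (\<forall>c a. invol A (csc A c a) = csc A (cnj c) (invol A a)) \<and>
     (\<forall>a b. invol A (a * b) = invol A b * invol A a) \<and>
     (\<forall>a. invol A (invol A a) = a) \<and>
     (\<forall>a. norm (invol A a * a) = (norm a)\<^sup>2)"

definition cstar_positive :: "('a::{real_normed_algebra, banach}) cstar_ops \<Rightarrow> 'a \<Rightarrow> bool" where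
  "cstar_positive A a \<longleftrightarrow> (\<exists>b. a = invol A b * b)"

text \<open>A left Hilbert A-module whose carrier is the whole type 'h.\<close>

record ('a, 'h) hmod_ops =
  hsc :: "complex \<Rightarrow> 'h \<Rightarrow> 'h"
  hact :: "'a \<Rightarrow> 'h \<Rightarrow> 'h"
  hinner :: "'h \<Rightarrow> 'h \<Rightarrow> 'a"

definition hnorm :: "('a::real_normed_vector, 'h) hmod_ops \<Rightarrow> 'h \<Rightarrow> real" where
  "hnorm H x = sqrt (norm (hinner H x x))"

definition hilbert_module ::
  "('a::{real_normed_algebra, banach}) cstar_ops \<Rightarrow> ('a, 'h::ab_group_add) hmod_ops \<Rightarrow> bool" where
  "hilbert_module A H \<longleftrightarrow>
     (\<forall>c d x. hsc H (c + d) x = hsc H c x + hsc H d x) \<and>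
     (\<forall>c x y. hsc H c (x + y) = hsc H c x + hsc H c y) \<and>
     (\<forall>c d x. hsc H (c * d) x = hsc H c (hsc H d x)) \<and>
     (\<forall>x. hsc H 1 x = x) \<and>
     (\<forall>a x y. hact H a (x + y) = hact H a x + hact H a y) \<and>
     (\<forall>a b x. hact H (a + b) x = hact H a x + hact H b x) \<and>
     (\<forall>a b x. hact H (a * b) x = hact H a (hact H b x)) \<and>
     (\<forall>c a x. hsc H c (hact H a x) = hact H (csc A c a) x) \<and>
     (\<forall>c a x. hact H a (hsc H c x) = hact H (csc A c a) x) \<and>
     (\<forall>x y z. hinner H (x + y) z = hinner H x z + hinner H y z) \<and>
     (\<forall>c x z. hinner H (hsc H c x) z = csc A c (hinner H x z)) \<and>
     (\<forall>a x z. hinner H (hact H a x) z = a * hinner H x z) \<and>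
     (\<forall>x y. hinner H x y = invol A (hinner H y x)) \<and>
     (\<forall>x. cstar_positive A (hinner H x x)) \<and>
     (\<forall>x. hinner H x x = 0 \<longrightarrow> x = 0) \<and>
     (\<forall>X::nat \<Rightarrow> 'h. (\<forall>e>0. \<exists>N. \<forall>m\<ge>N. \<forall>n\<ge>N. hnorm H (X m - X n) < e) \<longrightarrow>
         (\<exists>l. (\<lambda>n. hnorm H (X n - l)) \<longlonglongrightarrow> 0))"

definition hspan :: "('a::ab_group_add, 'h::ab_group_add) hmod_ops \<Rightarrow> 'h set \<Rightarrow> 'h set" where
  "hspan H S = {x. \<exists>F c. finite F \<and> F \<subseteq> S \<and> x = (\<Sum>s\<in>F. hact H (c s) s)}"

definition hdense :: "('a::real_normed_vector, 'h::ab_group_add) hmod_ops \<Rightarrow> 'h set \<Rightarrow> bool" where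
  "hdense H S \<longleftrightarrow> (\<forall>x. \<forall>e>0. \<exists>y\<in>S. hnorm H (x - y) < e)"

definition countably_generated ::
  "('a::{real_normed_algebra, banach}, 'h::ab_group_add) hmod_ops \<Rightarrow> bool" where
  "countably_generated H \<longleftrightarrow> (\<exists>G. countable G \<and> hdense H (hspan H G))"

definition hilbert_basis ::
  "('a::{real_normed_algebra, banach}, 'h::ab_group_add) hmod_ops \<Rightarrow> 'j set \<Rightarrow> ('j \<Rightarrow> 'h) \<Rightarrow> bool" where
  "hilbert_basis H J f \<longleftrightarrow>
     hdense H (hspan H (f ` J)) \<and>
     (\<forall>S a. finite S \<and> S \<subseteq> J \<longrightarrow>
        ((\<Sum>j\<in>S. hact H (a j) (f j)) = 0 \<longleftrightarrow> (\<forall>j\<in>S. hact H (a j) (f j) = 0))) \<and>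
     (\<forall>j\<in>J. hnorm H (f j) = 1)"

definition orthogonal_family ::
  "('a::{real_normed_algebra, banach}, 'h::ab_group_add) hmod_ops \<Rightarrow> 'j set \<Rightarrow> ('j \<Rightarrow> 'h) \<Rightarrow> bool" where
  "orthogonal_family H J f \<longleftrightarrow> (\<forall>i\<in>J. \<forall>j\<in>J. i \<noteq> j \<longrightarrow> hinner H (f i) (f j) = 0)"

definition adj_op ::
  "('a::{real_normed_algebra, banach}, 'h::ab_group_add) hmod_ops \<Rightarrow> 'h set \<Rightarrow> 'h set \<Rightarrow> ('h \<Rightarrow> 'h) \<Rightarrow> bool" where
  "adj_op H M N T \<longleftrightarrow>
     (\<forall>x\<in>M. T x \<in> N) \<and>
     (\<forall>x\<in>M. \<forall>y\<in>M. T (x + y) = T x + T y) \<and>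
     (\<forall>c. \<forall>x\<in>M. T (hsc H c x) = hsc H c (T x)) \<and>
     (\<forall>a. \<forall>x\<in>M. T (hact H a x) = hact H a (T x)) \<and>
     (\<exists>K. \<forall>x\<in>M. hnorm H (T x) \<le> K * hnorm H x) \<and>
     (\<exists>S. (\<forall>y\<in>N. S y \<in> M) \<and> (\<forall>x\<in>M. \<forall>y\<in>N. hinner H (T x) y = hinner H x (S y)))"

definition invertible_op ::
  "('a::{real_normed_algebra, banach}, 'h::ab_group_add) hmod_ops \<Rightarrow> 'h set \<Rightarrow> 'h set \<Rightarrow> ('h \<Rightarrow> 'h) \<Rightarrow> bool" where
  "invertible_op H M N T \<longleftrightarrow>
     adj_op H M N T \<and>
     (\<exists>S. adj_op H N M S \<and> (\<forall>x\<in>M. S (T x) = x) \<and> (\<forall>y\<in>N. T (S y) = y))"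

definition unitary_op ::
  "('a::{real_normed_algebra, banach}, 'h::ab_group_add) hmod_ops \<Rightarrow> 'h set \<Rightarrow> 'h set \<Rightarrow> ('h \<Rightarrow> 'h) \<Rightarrow> bool" where
  "unitary_op H M N T \<longleftrightarrow>
     adj_op H M N T \<and> T ` M = N \<and>
     (\<forall>x\<in>M. \<forall>y\<in>M. hinner H (T x) (T y) = hinner H x y)"

definition orth_projection ::
  "('a::{real_normed_algebra, banach}, 'h::ab_group_add) hmod_ops \<Rightarrow> ('h \<Rightarrow> 'h) \<Rightarrow> bool" where
  "orth_projection H P \<longleftrightarrow>
     adj_op H UNIV UNIV P \<and> (\<forall>x. P (P x) = P x) \<and>
     (\<forall>x y. hinner H (P x) y = hinner H x (P y))"

text \<open>Standard normalized tight frame for the submodule M: the reconstruction series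
  converges in norm (unconditionally, over the index set J).\<close>
definition std_nt_frame ::
  "('a::{real_normed_algebra, banach}, 'h::ab_group_add) hmod_ops \<Rightarrow> 'h set \<Rightarrow> 'j set \<Rightarrow> ('j \<Rightarrow> 'h) \<Rightarrow> bool" where
  "std_nt_frame H M J x \<longleftrightarrow>
     (\<forall>j\<in>J. x j \<in> M) \<and>
     (\<forall>z\<in>M. ((\<lambda>j. hinner H z (x j) * hinner H (x j) z) has_sum hinner H z z) J)"

definition similar_frames ::
  "('a::{real_normed_algebra, banach}, 'h::ab_group_add) hmod_ops \<Rightarrow> 'h set \<Rightarrow> 'h set \<Rightarrow> 'j set \<Rightarrow> ('j \<Rightarrow> 'h) \<Rightarrow> ('j \<Rightarrow> 'h) \<Rightarrow> bool" where
  "similar_frames H M N J x y \<longleftrightarrow> (\<exists>T. invertible_op H M N T \<and> (\<forall>j\<in>J. T (x j) = y j))"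

definition unitarily_equiv_frames ::
  "('a::{real_normed_algebra, banach}, 'h::ab_group_add) hmod_ops \<Rightarrow> 'h set \<Rightarrow> 'h set \<Rightarrow> 'j set \<Rightarrow> ('j \<Rightarrow> 'h) \<Rightarrow> ('j \<Rightarrow> 'h) \<Rightarrow> bool" where
  "unitarily_equiv_frames H M N J x y \<longleftrightarrow> (\<exists>T. unitary_op H M N T \<and> (\<forall>j\<in>J. T (x j) = y j))"

end

theory Submission
  imports Defs "HOL-Computational_Algebra.Formal_Power_Series"
begin


typedef (overloaded) 'a endo = "UNIV :: ('a::real_normed_vector \<Rightarrow>\<^sub>L 'a) set"
  morphisms eb Eb by auto

setup_lifting type_definition_endo

instantiation endo :: (real_normed_vector) real_normed_vector
begin
lift_definition norm_endo :: "'a endo \<Rightarrow> real" is norm .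
lift_definition minus_endo :: "'a endo \<Rightarrow> 'a endo \<Rightarrow> 'a endo" is "(-)" .
lift_definition plus_endo :: "'a endo \<Rightarrow> 'a endo \<Rightarrow> 'a endo" is "(+)" .
lift_definition uminus_endo :: "'a endo \<Rightarrow> 'a endo" is "uminus" .
lift_definition zero_endo :: "'a endo" is "0" .
lift_definition scaleR_endo :: "real \<Rightarrow> 'a endo \<Rightarrow> 'a endo" is "scaleR" .
definition dist_endo :: "'a endo \<Rightarrow> 'a endo \<Rightarrow> real" where "dist_endo a b = norm (a - b)"
definition uniformity_endo :: "('a endo \<times> 'a endo) filter" where
  "uniformity_endo = (INF e\<in>{0 <..}. principal {(x, y). dist x y < e})"
definition open_endo :: "'a endo set \<Rightarrow> bool" where
  "open_endo S = (\<forall>x\<in>S. \<forall>\<^sub>F (x', y) in uniformity. x' = x \<longrightarrow> y \<in> S)"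
definition sgn_endo :: "'a endo \<Rightarrow> 'a endo" where "sgn_endo x = scaleR (inverse (norm x)) x"
instance
  apply standard
  unfolding dist_endo_def open_endo_def sgn_endo_def uniformity_endo_def
  apply (rule refl | (transfer, simp add: norm_triangle_ineq algebra_simps))+
  done
end

instantiation endo :: (real_normed_vector) "{times, one}"
begin
lift_definition times_endo :: "'a endo \<Rightarrow> 'a endo \<Rightarrow> 'a endo" is "blinfun_compose" .
lift_definition one_endo :: "'a endo" is "id_blinfun" .
instance ..
end

lemma eb_inj: "eb X = eb Y \<Longrightarrow> X = Y" by (simp add: eb_inject)

instance endo :: (real_normed_vector) real_normed_algebra
  apply standard
  apply (transfer; rule blinfun_eqI; simp add: blinfun.bilinear_simps)+
  apply (transfer; simp add: norm_blinfun_compose)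
  done

instance endo :: (real_normed_vector) monoid_mult
  apply standard
  apply (transfer; rule blinfun_eqI; simp)+
  done

lemma dist_endo_eb: "dist X Y = dist (eb X) (eb Y)"
  by (simp add: dist_endo_def dist_norm norm_endo.rep_eq minus_endo.rep_eq)

instance endo :: (banach) banach
proof
  fix X :: "nat \<Rightarrow> 'a endo"
  assume "Cauchy X"
  then have "Cauchy (\<lambda>n. eb (X n))" unfolding Cauchy_def dist_endo_eb .
  then have "convergent (\<lambda>n. eb (X n))" by (rule Cauchy_convergent)
  then obtain L where "(\<lambda>n. eb (X n)) \<longlonglongrightarrow> L" unfolding convergent_def by blast
  then have "X \<longlonglongrightarrow> Eb L" unfolding lim_sequentially dist_endo_eb Eb_inverse[OF UNIV_I] .
  then show "convergent X" by (auto simp: convergent_def)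
qed

definition ap :: "'a::real_normed_vector endo \<Rightarrow> 'a \<Rightarrow> 'a" where "ap X z = blinfun_apply (eb X) z"

lemma ap_add[simp]: "ap (X + Y) z = ap X z + ap Y z" unfolding ap_def by transfer (simp add: blinfun.bilinear_simps)
lemma ap_diff[simp]: "ap (X - Y) z = ap X z - ap Y z" unfolding ap_def by transfer (simp add: blinfun.bilinear_simps)
lemma ap_minus[simp]: "ap (- X) z = - ap X z" unfolding ap_def by transfer (simp add: blinfun.bilinear_simps)
lemma ap_zero[simp]: "ap 0 z = 0" unfolding ap_def by transfer (simp add: blinfun.bilinear_simps)
lemma ap_scaleR[simp]: "ap (r *\<^sub>R X) z = r *\<^sub>R ap X z" unfolding ap_def by transfer (simp add: blinfun.bilinear_simps)
lemma ap_mult[simp]: "ap (X * Y) z = ap X (ap Y z)" unfolding ap_def by transfer (simp add: blinfun.bilinear_simps)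
lemma ap_one[simp]: "ap 1 z = z" unfolding ap_def by transfer (simp add: blinfun.bilinear_simps)
lemma ap_linear: "bounded_linear (ap X)" unfolding ap_def by (rule blinfun.bounded_linear_right)
lemma ap_add_right: "ap X (z + w) = ap X z + ap X w" unfolding ap_def by (simp add: blinfun.bilinear_simps)
lemma ap_diff_right: "ap X (z - w) = ap X z - ap X w" unfolding ap_def by (simp add: blinfun.bilinear_simps)
lemma ap_minus_right: "ap X (- z) = - ap X z" unfolding ap_def by (simp add: blinfun.bilinear_simps)
lemma ap_zero_right[simp]: "ap X 0 = 0" unfolding ap_def by (simp add: blinfun.bilinear_simps)
lemma norm_ap: "norm (ap X z) \<le> norm X * norm z" unfolding ap_def by transfer (rule norm_blinfun)
lemma norm_endo_bound: "0 \<le> b \<Longrightarrow> (\<And>z. norm (ap X z) \<le> b * norm z) \<Longrightarrow> norm X \<le> b"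
  unfolding ap_def by transfer (rule norm_blinfun_bound)
lemma endo_eqI: "(\<And>z. ap X z = ap Y z) \<Longrightarrow> X = Y"
  unfolding ap_def by transfer (rule blinfun_eqI)
lemma norm_one_endo: "norm (1::'a::real_normed_vector endo) \<le> 1" by transfer (rule norm_blinfun_id_le)

definition mkE :: "('a::real_normed_vector \<Rightarrow> 'a) \<Rightarrow> 'a endo" where "mkE f = Eb (Blinfun f)"
lemma ap_mkE: "bounded_linear f \<Longrightarrow> ap (mkE f) = f"
  unfolding ap_def mkE_def by (simp add: Eb_inverse bounded_linear_Blinfun_apply)

lemma tendsto_ap: "(F \<longlongrightarrow> X) G \<Longrightarrow> ((\<lambda>n. ap (F n) z) \<longlongrightarrow> ap X z) G"
proof -
  have "bounded_linear (\<lambda>X. ap X z)"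
    by (rule bounded_linear_intro[where K="norm z"]) (auto simp: mult.commute[of "norm z"] norm_ap)
  then show "(F \<longlongrightarrow> X) G \<Longrightarrow> ((\<lambda>n. ap (F n) z) \<longlongrightarrow> ap X z) G"
    using bounded_linear.tendsto by blast
qed


definition gq :: "nat \<Rightarrow> real" where "gq n = ((1/2) gchoose n) * (-1)^n"

lemma gq_0: "gq 0 = 1" by (simp add: gq_def)

lemma prod_sign1: "(-1)^n * (\<Prod>i = 0..<n. (-1/2::real) - of_nat i) \<ge> 0"
proof (induction n)
  case 0 then show ?case by simp
next
  case (Suc n)
  have "(-1::real)^Suc n * (\<Prod>i = 0..<Suc n. (-1/2::real) - of_nat i)
      = ((-1)^n * (\<Prod>i = 0..<n. (-1/2::real) - of_nat i)) * (1/2 + of_nat n)"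
    by (simp add: algebra_simps)
  also have "\<dots> \<ge> 0" by (rule mult_nonneg_nonneg[OF Suc.IH]) simp
  finally show ?case .
qed

lemma prod_sign2: "n \<ge> 1 \<Longrightarrow> (-1)^n * (\<Prod>i = 0..<n. (1/2::real) - of_nat i) \<le> 0"
proof (induction n rule: dec_induct)
  case base then show ?case by simp
next
  case (step n)
  have "(-1::real)^Suc n * (\<Prod>i = 0..<Suc n. (1/2::real) - of_nat i)
      = ((-1)^n * (\<Prod>i = 0..<n. (1/2::real) - of_nat i)) * (of_nat n - 1/2)"
    by (simp add: algebra_simps)
  also have "\<dots> \<le> 0" by (rule mult_nonpos_nonneg[OF step.IH]) (use step.hyps in simp)
  finally show ?case .
qed

lemma gq_nonpos: "n \<ge> 1 \<Longrightarrow> gq n \<le> 0"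
proof -
  assume n: "n \<ge> 1"
  have "fact n * gq n = (-1)^n * (\<Prod>i = 0..<n. (1/2::real) - of_nat i)"
    unfolding gq_def by (simp add: gbinomial_mult_fact[symmetric] algebra_simps)
  then have "fact n * gq n \<le> 0" using prod_sign2[OF n] by simp
  then show ?thesis using fact_gt_zero[of n, where 'a=real] by (auto simp: mult_le_0_iff)
qed

lemma gq_partial: "(\<Sum>k\<le>m. gq k) \<ge> 0"
proof -
  have "(\<Sum>k\<le>m. gq k) = (-1)^m * ((1/2 - 1) gchoose m)"
    unfolding gq_def by (rule gbinomial_sum_lower_neg)
  also have "fact m * \<dots> = (-1)^m * (\<Prod>i = 0..<m. (-1/2::real) - of_nat i)"
    by (simp add: gbinomial_mult_fact[symmetric] algebra_simps)
  finally have "fact m * (\<Sum>k\<le>m. gq k) \<ge> 0" using prod_sign1[of m] by simp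
  then show ?thesis using fact_gt_zero[of m, where 'a=real] by (auto simp: zero_le_mult_iff)
qed

lemma abs_gq_Suc: "\<bar>gq (Suc n)\<bar> = - gq (Suc n)" using gq_nonpos[of "Suc n"] by simp

lemma sum_abs_gq_Suc: "(\<Sum>k<n. \<bar>gq (Suc k)\<bar>) \<le> 1"
proof -
  have "(\<Sum>k<n. \<bar>gq (Suc k)\<bar>) = - (\<Sum>k<n. gq (Suc k))" by (simp add: abs_gq_Suc sum_negf)
  also have "(\<Sum>k<n. gq (Suc k)) = (\<Sum>k\<le>n. gq k) - 1"
  proof -
    have e: "(\<Sum>k\<le>n. gq k) = gq 0 + (\<Sum>k<n. gq (Suc k))"
      unfolding lessThan_Suc_atMost[symmetric] by (rule sum.lessThan_Suc_shift)
    then show ?thesis by (simp add: gq_0)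
  qed
  finally show ?thesis using gq_partial[of n] by simp
qed

lemma summable_abs_gq_Suc: "summable (\<lambda>n. \<bar>gq (Suc n)\<bar>)"
  by (rule summableI_nonneg_bounded[where x=1]) (auto simp: sum_abs_gq_Suc)

lemma suminf_abs_gq_Suc: "(\<Sum>n. \<bar>gq (Suc n)\<bar>) \<le> 1"
  by (rule suminf_le_const[OF summable_abs_gq_Suc]) (simp add: sum_abs_gq_Suc)

lemma summable_abs_gq: "summable (\<lambda>n. \<bar>gq n\<bar>)"
  using summable_abs_gq_Suc by (subst summable_Suc_iff[symmetric])

lemma gq_conv: "(\<Sum>i\<le>k. gq i * gq (k - i)) = (if k = 0 then 1 else if k = 1 then -1 else 0)"
proof -
  have "(\<Sum>i\<le>k. gq i * gq (k - i)) = (\<Sum>i\<le>k. ((1/2) gchoose i) * ((1/2) gchoose (k - i))) * (-1)^k"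
    unfolding gq_def sum_distrib_right
    by (intro sum.cong refl) (auto simp: power_add[symmetric])
  also have "(\<Sum>i\<le>k. ((1/2::real) gchoose i) * ((1/2) gchoose (k - i))) = (1/2 + 1/2) gchoose k"
    using gbinomial_Vandermonde[of "1/2::real" "1/2" k] by (simp add: atLeast0AtMost)
  also have "(1/2 + 1/2::real) gchoose k = of_nat (1 choose k)"
    by (simp add: binomial_gbinomial)
  finally show ?thesis
    by (cases k; cases "k - 1") (auto simp: binomial_eq_0)
qed


definition cm :: "'a::real_normed_vector endo \<Rightarrow> 'a endo \<Rightarrow> bool" where "cm X Y \<longleftrightarrow> X * Y = Y * X"

lemma cm_refl: "cm X X" by (simp add: cm_def)
lemma cm_sym: "cm X Y \<Longrightarrow> cm Y X" by (simp add: cm_def)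
lemma cm_add: "cm X Z \<Longrightarrow> cm Y Z \<Longrightarrow> cm (X + Y) Z" by (simp add: cm_def algebra_simps)
lemma cm_diff: "cm X Z \<Longrightarrow> cm Y Z \<Longrightarrow> cm (X - Y) Z" by (simp add: cm_def algebra_simps)
lemma cm_minus: "cm X Z \<Longrightarrow> cm (- X) Z" by (simp add: cm_def)
lemma cm_scaleR: "cm X Z \<Longrightarrow> cm (r *\<^sub>R X) Z" by (simp add: cm_def)
lemma cm_one: "cm 1 Z" by (simp add: cm_def)
lemma cm_zero: "cm 0 Z" by (simp add: cm_def)
lemma cm_mult: "cm X Z \<Longrightarrow> cm Y Z \<Longrightarrow> cm (X * Y) Z"
  unfolding cm_def by (metis mult.assoc)
lemma cm_pow: "cm X Z \<Longrightarrow> cm (X ^ n) Z"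
  by (induction n) (auto simp: cm_one cm_mult)

lemma cm_lim:
  fixes X :: "nat \<Rightarrow> 'a::real_normed_vector endo"
  assumes "X \<longlonglongrightarrow> X0" "\<And>n. cm (X n) Z" shows "cm X0 Z"
proof -
  have "(\<lambda>n. X n * Z) \<longlonglongrightarrow> X0 * Z" by (intro tendsto_intros assms)
  moreover have "(\<lambda>n. X n * Z) \<longlonglongrightarrow> Z * X0"
    using assms(2) unfolding cm_def by (simp, intro tendsto_intros assms)
  ultimately show ?thesis unfolding cm_def using LIMSEQ_unique by blast
qed

lemma norm_pow_le1: "norm (Y::'a::real_normed_vector endo) \<le> 1 \<Longrightarrow> norm (Y ^ n) \<le> 1"
proof (induction n)
  case 0 then show ?case by (simp add: norm_one_endo)
next
  case (Suc n)
  have "norm (Y ^ Suc n) \<le> norm Y * norm (Y ^ n)" by (simp add: norm_mult_ineq)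
  also have "\<dots> \<le> 1" using Suc by (intro mult_le_one) auto
  finally show ?case .
qed

definition sqS :: "'a::banach endo \<Rightarrow> 'a endo" where "sqS Y = (\<Sum>n. gq n *\<^sub>R Y ^ n)"

lemma sqS_summ: "norm (Y::'a::banach endo) \<le> 1 \<Longrightarrow> summable (\<lambda>n. norm (gq n *\<^sub>R Y ^ n))"
  by (rule summable_comparison_test'[OF summable_abs_gq, of 0])
     (simp add: mult_left_le norm_pow_le1)

lemma sqS_sq: "norm (Y::'a::banach endo) \<le> 1 \<Longrightarrow> sqS Y * sqS Y = 1 - Y"
proof -
  assume Y: "norm Y \<le> 1"
  have "sqS Y * sqS Y = (\<Sum>k. \<Sum>i\<le>k. (gq i *\<^sub>R Y ^ i) * (gq (k - i) *\<^sub>R Y ^ (k - i)))"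
    unfolding sqS_def by (rule Cauchy_product[OF sqS_summ[OF Y] sqS_summ[OF Y]])
  also have "(\<lambda>k. \<Sum>i\<le>k. (gq i *\<^sub>R Y ^ i) * (gq (k - i) *\<^sub>R Y ^ (k - i)))
      = (\<lambda>k. (\<Sum>i\<le>k. gq i * gq (k - i)) *\<^sub>R Y ^ k)"
  proof
    fix k
    have "(\<Sum>i\<le>k. (gq i *\<^sub>R Y ^ i) * (gq (k - i) *\<^sub>R Y ^ (k - i)))
        = (\<Sum>i\<le>k. (gq i * gq (k - i)) *\<^sub>R Y ^ k)"
      by (intro sum.cong refl) (simp add: power_add[symmetric])
    then show "(\<Sum>i\<le>k. (gq i *\<^sub>R Y ^ i) * (gq (k - i) *\<^sub>R Y ^ (k - i)))
        = (\<Sum>i\<le>k. gq i * gq (k - i)) *\<^sub>R Y ^ k"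
      by (simp add: scaleR_sum_left)
  qed
  also have "\<dots> = (\<lambda>k. (if k = 0 then 1 else if k = 1 then -1 else 0) *\<^sub>R Y ^ k)"
    by (simp add: gq_conv)
  also have "suminf \<dots> = (\<Sum>k\<in>{0,1}. (if k = 0 then 1 else if k = 1 then -1 else 0) *\<^sub>R Y ^ k)"
    by (rule suminf_finite) auto
  also have "\<dots> = 1 - Y" by simp
  finally show ?thesis .
qed

lemma sqS_cm: "norm (Y::'a::banach endo) \<le> 1 \<Longrightarrow> cm Y Z \<Longrightarrow> cm (sqS Y) Z"
proof -
  assume Y: "norm Y \<le> 1" and c: "cm Y Z"
  have s: "summable (\<lambda>n. gq n *\<^sub>R Y ^ n)" by (rule summable_norm_cancel[OF sqS_summ[OF Y]])
  have "cm (\<Sum>i<n. gq i *\<^sub>R Y ^ i) Z" for n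
    by (induction n) (auto simp: cm_zero cm_add cm_scaleR cm_pow c)
  then show ?thesis unfolding sqS_def by (rule cm_lim[OF summable_LIMSEQ[OF s]])
qed

lemma sqS_dist: "norm (Y::'a::banach endo) \<le> 1 \<Longrightarrow> norm (1 - sqS Y) \<le> 1"
proof -
  assume Y: "norm Y \<le> 1"
  define f where "f n = gq n *\<^sub>R Y ^ n" for n
  have fe: "f = (\<lambda>n. gq n *\<^sub>R Y ^ n)" by (simp add: f_def fun_eq_iff)
  have sn: "summable (\<lambda>n. norm (f n))" unfolding f_def by (rule sqS_summ[OF Y])
  have s: "summable f" by (rule summable_norm_cancel[OF sn])
  have sn1: "summable (\<lambda>n. norm (f (Suc n)))" using sn by (subst summable_Suc_iff)
  have "(\<Sum>n. f (Suc n)) = sqS Y - 1" unfolding suminf_split_head[OF s] by (simp add: fe sqS_def gq_0)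
  then have "norm (1 - sqS Y) = norm (\<Sum>n. f (Suc n))" by (simp add: norm_minus_commute)
  also have "\<dots> \<le> (\<Sum>n. norm (f (Suc n)))" by (rule summable_norm[OF sn1])
  also have "\<dots> \<le> (\<Sum>n. \<bar>gq (Suc n)\<bar>)"
    by (rule suminf_le[OF _ sn1 summable_abs_gq_Suc])
       (simp add: f_def mult_left_le norm_pow_le1[OF Y] del: power_Suc)
  also have "\<dots> \<le> 1" by (rule suminf_abs_gq_Suc)
  finally show ?thesis .
qed

locale cstar =
  fixes A :: "('a::{real_normed_algebra, banach}) cstar_ops"
  assumes cs: "cstar_algebra A"
begin

abbreviation iv where "iv \<equiv> invol A"
abbreviation sc where "sc \<equiv> csc A"

lemma sc_add_l_all: "\<forall>c d a. sc (c + d) a = sc c a + sc d a" using cs unfolding cstar_algebra_def by (elim conjE) assumption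
lemmas sc_add_l = sc_add_l_all[rule_format]
lemma sc_add_all: "\<forall>c a b. sc c (a + b) = sc c a + sc c b" using cs unfolding cstar_algebra_def by (elim conjE) assumption
lemmas sc_add = sc_add_all[rule_format]
lemma sc_sc_all: "\<forall>c d a. sc (c * d) a = sc c (sc d a)" using cs unfolding cstar_algebra_def by (elim conjE) assumption
lemmas sc_sc = sc_sc_all[rule_format]
lemma sc_real_all: "\<forall>r a. sc (complex_of_real r) a = r *\<^sub>R a" using cs unfolding cstar_algebra_def by (elim conjE) assumption
lemmas sc_real = sc_real_all[rule_format]
lemma norm_sc_all: "\<forall>c a. norm (sc c a) = cmod c * norm a" using cs unfolding cstar_algebra_def by (elim conjE) assumption
lemmas norm_sc = norm_sc_all[rule_format]
lemma sc_mult_l_all: "\<forall>c a b. sc c (a * b) = sc c a * b" using cs unfolding cstar_algebra_def by (elim conjE) assumption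
lemmas sc_mult_l = sc_mult_l_all[rule_format]
lemma sc_mult_r_all: "\<forall>c a b. sc c (a * b) = a * sc c b" using cs unfolding cstar_algebra_def by (elim conjE) assumption
lemmas sc_mult_r = sc_mult_r_all[rule_format]
lemma iv_add_all: "\<forall>a b. iv (a + b) = iv a + iv b" using cs unfolding cstar_algebra_def by (elim conjE) assumption
lemmas iv_add = iv_add_all[rule_format]
lemma iv_sc_all: "\<forall>c a. iv (sc c a) = sc (cnj c) (iv a)" using cs unfolding cstar_algebra_def by (elim conjE) assumption
lemmas iv_sc = iv_sc_all[rule_format]
lemma iv_mult_all: "\<forall>a b. iv (a * b) = iv b * iv a" using cs unfolding cstar_algebra_def by (elim conjE) assumption
lemmas iv_mult = iv_mult_all[rule_format]
lemma iv_iv_all: "\<forall>a. iv (iv a) = a" using cs unfolding cstar_algebra_def by (elim conjE) assumption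
lemmas iv_iv[simp] = iv_iv_all[rule_format]
lemma cstar_id_all: "\<forall>a. norm (iv a * a) = (norm a)\<^sup>2" using cs unfolding cstar_algebra_def by (elim conjE) assumption
lemmas cstar_id = cstar_id_all[rule_format]

lemma iv_zero[simp]: "iv 0 = 0"
proof -
  have "iv (0 + 0) = iv 0 + iv 0" by (rule iv_add)
  then show ?thesis by simp
qed

lemma iv_minus: "iv (- a) = - iv a"
proof -
  have "iv (a + - a) = iv a + iv (- a)" by (rule iv_add)
  then show ?thesis by (simp add: add_eq_0_iff)
qed

lemma iv_diff: "iv (a - b) = iv a - iv b"
  using iv_add[of a "- b"] by (simp add: iv_minus)

lemma sc_scaleR: "sc c (r *\<^sub>R a) = r *\<^sub>R sc c a"
proof -
  have "sc c (r *\<^sub>R a) = sc c (sc (complex_of_real r) a)" by (simp add: sc_real)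
  also have "\<dots> = sc (complex_of_real r * c) a" by (simp add: sc_sc[symmetric] mult.commute)
  also have "\<dots> = r *\<^sub>R sc c a" by (simp add: sc_sc sc_real)
  finally show ?thesis .
qed

lemma iv_scaleR: "iv (r *\<^sub>R a) = r *\<^sub>R iv a"
proof -
  have "iv (r *\<^sub>R a) = iv (sc (complex_of_real r) a)" by (simp add: sc_real)
  also have "\<dots> = sc (cnj (complex_of_real r)) (iv a)" by (rule iv_sc)
  also have "\<dots> = sc (complex_of_real r) (iv a)" by simp
  also have "\<dots> = r *\<^sub>R iv a" by (rule sc_real)
  finally show ?thesis .
qed

lemma norm_iv_le: "norm a \<le> norm (iv a)"
proof (cases "norm a = 0")
  case True then show ?thesis by simp
next
  case False
  have "norm a * norm a = norm (iv a * a)" by (simp add: cstar_id power2_eq_square)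
  also have "\<dots> \<le> norm (iv a) * norm a" by (rule norm_mult_ineq)
  finally show ?thesis using False by (simp add: mult_le_cancel_right)
qed

lemma norm_iv[simp]: "norm (iv a) = norm a"
  using norm_iv_le[of a] norm_iv_le[of "iv a"] by simp

lemma sc_i_i: "sc \<i> (sc \<i> w) = - w"
proof -
  have "sc \<i> (sc \<i> w) = sc (\<i> * \<i>) w" by (rule sc_sc[symmetric])
  also have "\<i> * \<i> = complex_of_real (-1)" by simp
  also have "sc (complex_of_real (-1)) w = (-1) *\<^sub>R w" by (rule sc_real)
  finally show ?thesis by simp
qed

lemma sc_mi: "sc (- \<i>) w = - sc \<i> w"
proof -
  have "- \<i> = complex_of_real (-1) * \<i>" by simp
  then have "sc (- \<i>) w = sc (complex_of_real (-1) * \<i>) w" by simp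
  also have "\<dots> = sc (complex_of_real (-1)) (sc \<i> w)" by (rule sc_sc)
  also have "\<dots> = (-1) *\<^sub>R sc \<i> w" by (rule sc_real)
  finally show ?thesis by simp
qed

lemma blin_sc: "bounded_linear (sc c)"
  by (rule bounded_linear_intro[where K="cmod c"]) (simp_all add: sc_add sc_scaleR norm_sc)

lemma blin_iv: "bounded_linear iv"
  by (rule bounded_linear_intro[where K="1"]) (simp_all add: iv_add iv_scaleR)

definition Lm :: "'a \<Rightarrow> 'a endo" where "Lm a = mkE (\<lambda>z. a * z)"
definition Ci :: "'a endo" where "Ci = mkE (sc \<i>)"

lemma ap_Lm[simp]: "ap (Lm a) z = a * z"
  unfolding Lm_def by (simp add: ap_mkE bounded_linear_mult_right)
lemma ap_Ci[simp]: "ap Ci z = sc \<i> z"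
  unfolding Ci_def by (simp add: ap_mkE blin_sc)

lemma Ci_Ci: "Ci * Ci = - 1" by (rule endo_eqI) (simp add: sc_i_i)
lemma norm_Ci: "norm Ci \<le> 1" by (rule norm_endo_bound) (auto simp: norm_sc)
lemma cm_Lm_Ci: "cm (Lm a) Ci" unfolding cm_def by (rule endo_eqI) (simp add: sc_mult_r)
lemma Lm_add: "Lm (a + b) = Lm a + Lm b" by (rule endo_eqI) (simp add: distrib_right)

lemma norm_Lm: "norm (Lm a) = norm a"
proof (rule antisym)
  show "norm (Lm a) \<le> norm a" by (rule norm_endo_bound) (auto simp: norm_mult_ineq)
  show "norm a \<le> norm (Lm a)"
  proof (cases "norm a = 0")
    case True then show ?thesis by simp
  next
    case False
    have "norm a * norm a = norm (a * iv a)" using cstar_id[of "iv a"] by (simp add: power2_eq_square)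
    also have "\<dots> = norm (ap (Lm a) (iv a))" by simp
    also have "\<dots> \<le> norm (Lm a) * norm a" using norm_ap[of "Lm a" "iv a"] by simp
    finally show ?thesis using False by (simp add: mult_le_cancel_right)
  qed
qed

definition adj :: "'a endo \<Rightarrow> 'a endo \<Rightarrow> bool" where
  "adj X Y \<longleftrightarrow> (\<forall>z w. iv (ap X z) * w = iv z * ap Y w)"
definition sa :: "'a endo \<Rightarrow> bool" where "sa X \<longleftrightarrow> adj X X"

lemma adj_sym: "adj X Y \<Longrightarrow> adj Y X"
  unfolding adj_def
proof (intro allI)
  fix z w assume a: "\<forall>z w. iv (ap X z) * w = iv z * ap Y w"
  have "iv (ap Y z) * w = iv (iv w * ap Y z)" by (simp add: iv_mult)
  also have "\<dots> = iv (iv (ap X w) * z)" using a by simp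
  also have "\<dots> = iv z * ap X w" by (simp add: iv_mult)
  finally show "iv (ap Y z) * w = iv z * ap X w" .
qed

lemma adj_add: "adj X X' \<Longrightarrow> adj Y Y' \<Longrightarrow> adj (X + Y) (X' + Y')"
  unfolding adj_def by (simp add: iv_add distrib_right distrib_left)
lemma adj_minus: "adj X X' \<Longrightarrow> adj (- X) (- X')"
  unfolding adj_def by (simp add: iv_minus)
lemma adj_diff: "adj X X' \<Longrightarrow> adj Y Y' \<Longrightarrow> adj (X - Y) (X' - Y')"
  unfolding adj_def by (simp add: iv_diff left_diff_distrib right_diff_distrib)
lemma adj_scaleR: "adj X X' \<Longrightarrow> adj (r *\<^sub>R X) (r *\<^sub>R X')"
  unfolding adj_def by (simp add: iv_scaleR)
lemma adj_zero: "adj 0 0" unfolding adj_def by simp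
lemma adj_one: "adj 1 1" unfolding adj_def by simp
lemma adj_mult: "adj X X' \<Longrightarrow> adj Y Y' \<Longrightarrow> adj (X * Y) (Y' * X')"
  unfolding adj_def by simp
lemma adj_Lm: "adj (Lm a) (Lm (iv a))"
  unfolding adj_def by (simp add: iv_mult mult.assoc)
lemma adj_Ci: "adj Ci (- Ci)"
  unfolding adj_def by (simp add: iv_sc sc_mult_l[symmetric] sc_mult_r sc_mi)
lemma adj_pow: assumes "adj X X'" shows "adj (X ^ n) (X' ^ n)"
proof (induction n)
  case 0 then show ?case by (simp add: adj_one)
next
  case (Suc n)
  have "adj (X * X ^ n) (X' ^ n * X')" by (rule adj_mult[OF assms Suc.IH])
  then show ?case by (simp add: power_commutes)
qed

lemma adj_lim:
  assumes "X \<longlonglongrightarrow> X0" "Y \<longlonglongrightarrow> Y0" "\<And>n. adj (X n) (Y n)" shows "adj X0 Y0"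
  unfolding adj_def
proof (intro allI)
  fix z w
  have "(\<lambda>n. iv (ap (X n) z) * w) \<longlonglongrightarrow> iv (ap X0 z) * w"
    by (intro tendsto_intros bounded_linear.tendsto[OF blin_iv] tendsto_ap assms)
  moreover have "(\<lambda>n. iv (ap (X n) z) * w) \<longlonglongrightarrow> iv z * ap Y0 w"
    using assms(3) unfolding adj_def by (simp, intro tendsto_intros tendsto_ap assms)
  ultimately show "iv (ap X0 z) * w = iv z * ap Y0 w" using LIMSEQ_unique by blast
qed

lemma cstar_adj: assumes "adj X Y" shows "norm X ^ 2 \<le> norm (Y * X)"
proof -
  have b: "norm (ap X z) \<le> sqrt (norm (Y * X)) * norm z" for z
  proof -
    have "norm (ap X z) ^ 2 = norm (iv (ap X z) * ap X z)" by (simp add: cstar_id)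
    also have "iv (ap X z) * ap X z = iv z * ap Y (ap X z)" using assms by (simp add: adj_def)
    also have "norm (iv z * ap Y (ap X z)) \<le> norm (iv z) * norm (ap (Y * X) z)"
      using norm_mult_ineq[of "iv z" "ap Y (ap X z)"] by simp
    also have "\<dots> \<le> norm z * (norm (Y * X) * norm z)"
      using mult_left_mono[OF norm_ap[of "Y * X" z], of "norm z"] by simp
    also have "\<dots> = (sqrt (norm (Y * X)) * norm z) ^ 2"
      by (simp add: power_mult_distrib power2_eq_square)
    finally show ?thesis by (rule power2_le_imp_le) simp
  qed
  have "norm X \<le> sqrt (norm (Y * X))" by (rule norm_endo_bound) (auto intro: b)
  then have "norm X ^ 2 \<le> sqrt (norm (Y * X)) ^ 2" by (intro power_mono) auto
  then show ?thesis by simp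
qed

lemma adj_norm_le: assumes "adj X Y" shows "norm X \<le> norm Y"
proof (cases "norm X = 0")
  case True then show ?thesis by simp
next
  case False
  have "norm X * norm X \<le> norm (Y * X)" using cstar_adj[OF assms] by (simp add: power2_eq_square)
  also have "\<dots> \<le> norm Y * norm X" by (rule norm_mult_ineq)
  finally show ?thesis using False by (simp add: mult_le_cancel_right)
qed

lemma adj_norm_eq: "adj X Y \<Longrightarrow> norm Y = norm X"
  by (meson adj_norm_le adj_sym antisym)

lemma adj_norm_prod: assumes "adj X Y" shows "norm (Y * X) = norm X ^ 2"
proof (rule antisym)
  have "norm (Y * X) \<le> norm Y * norm X" by (rule norm_mult_ineq)
  then show "norm (Y * X) \<le> norm X ^ 2" using adj_norm_eq[OF assms] by (simp add: power2_eq_square)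
  show "norm X ^ 2 \<le> norm (Y * X)" by (rule cstar_adj[OF assms])
qed

lemma sa_norm_sq: "sa X \<Longrightarrow> norm (X * X) = norm X ^ 2"
  unfolding sa_def by (rule adj_norm_prod)

lemma sqS_adj: assumes Y: "norm Y \<le> 1" and a: "adj Y Y" shows "adj (sqS Y) (sqS Y)"
proof -
  have s: "summable (\<lambda>n. gq n *\<^sub>R Y ^ n)" by (rule summable_norm_cancel[OF sqS_summ[OF Y]])
  have "adj (\<Sum>i<n. gq i *\<^sub>R Y ^ i) (\<Sum>i<n. gq i *\<^sub>R Y ^ i)" for n
    by (induction n) (auto simp: adj_zero intro!: adj_add adj_scaleR adj_pow a)
  then show ?thesis unfolding sqS_def
    by (rule adj_lim[OF summable_LIMSEQ[OF s] summable_LIMSEQ[OF s]])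
qed

end


context cstar begin

definition ps :: "'a endo \<Rightarrow> bool" where
  "ps X \<longleftrightarrow> sa X \<and> cm X Ci \<and> (\<exists>t\<ge>0. norm (t *\<^sub>R 1 - X) \<le> t)"

lemma UT:
  assumes W: "sa W" and V: "sa V" and WC: "cm W Ci" and VC: "cm V Ci" and WV: "cm W V"
  shows "norm W ^ 2 \<le> norm (W * W + V * V)"
proof -
  define x where "x = W + Ci * V"
  define x' where "x' = W - Ci * V"
  have "adj (Ci * V) (V * - Ci)" using adj_mult[OF adj_Ci V[unfolded sa_def]] .
  moreover have "V * - Ci = - (Ci * V)" using VC by (simp add: cm_def)
  ultimately have "adj (Ci * V) (- (Ci * V))" by simp
  then have "adj (W + Ci * V) (W + - (Ci * V))" by (rule adj_add[OF W[unfolded sa_def]])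
  then have axx: "adj x x'" unfolding x_def x'_def by simp
  have e1: "W * (Ci * V) = Ci * (W * V)" using WC by (simp add: cm_def mult.assoc[symmetric])
  have e2: "(Ci * V) * W = Ci * (W * V)" using WV by (simp add: cm_def mult.assoc)
  have e3: "(Ci * V) * (Ci * V) = - (V * V)"
  proof -
    have "(Ci * V) * (Ci * V) = Ci * ((V * Ci) * V)" by (simp add: mult.assoc)
    also have "\<dots> = (Ci * Ci) * (V * V)" using VC by (simp add: cm_def mult.assoc)
    finally show ?thesis by (simp add: Ci_Ci)
  qed
  have "x' * x = W * W - (Ci * V) * (Ci * V) + (W * (Ci * V) - (Ci * V) * W)"
    unfolding x_def x'_def by (simp add: algebra_simps)
  also have "\<dots> = W * W + V * V" using e1 e2 e3 by simp
  finally have xx: "x' * x = W * W + V * V" .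
  have nx: "norm x ^ 2 \<le> norm (W * W + V * V)" using cstar_adj[OF axx] xx by simp
  have nx': "norm x' = norm x" by (rule adj_norm_eq[OF axx])
  have "x + x' = 2 *\<^sub>R W" unfolding x_def x'_def by (simp add: scaleR_2)
  then have "W = (1/2) *\<^sub>R (x + x')" by simp
  then have "norm W = (1/2) * norm (x + x')" by simp
  also have "\<dots> \<le> (1/2) * (norm x + norm x')" by (intro mult_left_mono norm_triangle_ineq) simp
  finally have "norm W \<le> (1/2) * (norm x + norm x')" .
  then have Wx: "norm W \<le> norm x" using nx' by simp
  have "norm W ^ 2 \<le> norm x ^ 2" by (rule power_mono[OF Wx norm_ge_zero])
  then show ?thesis using nx by linarith
qed

lemma sa_mult_cm: "sa X \<Longrightarrow> sa Y \<Longrightarrow> cm X Y \<Longrightarrow> sa (X * Y)"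
  unfolding sa_def cm_def by (metis adj_mult)

lemma core1:
  assumes s: "sa s" and sC: "cm s Ci" and n: "norm s \<le> 1"
  shows "norm (1 - s * s) \<le> 1"
proof -
  define Y where "Y = s * s"
  have nY: "norm Y \<le> 1" unfolding Y_def
    using norm_mult_ineq[of s s] mult_le_one[OF n norm_ge_zero n] by linarith
  define r where "r = sqS Y"
  have rr: "r * r = 1 - Y" unfolding r_def by (rule sqS_sq[OF nY])
  have aY: "adj Y Y" unfolding Y_def using adj_mult[OF s[unfolded sa_def] s[unfolded sa_def]] .
  have r: "sa r" unfolding r_def sa_def by (rule sqS_adj[OF nY aY])
  have "cm Y s" unfolding Y_def by (intro cm_mult cm_refl)
  then have rs: "cm r s" unfolding r_def by (rule sqS_cm[OF nY])
  have "cm Y Ci" unfolding Y_def by (intro cm_mult sC)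
  then have rC: "cm r Ci" unfolding r_def by (rule sqS_cm[OF nY])
  have "norm r ^ 2 \<le> norm (r * r + s * s)" by (rule UT[OF r s rC sC rs])
  also have "r * r + s * s = 1" using rr by (simp add: Y_def)
  finally have "norm r ^ 2 \<le> 1" using norm_one_endo by (meson order_trans)
  moreover have "norm (1 - s * s) \<le> norm r ^ 2"
    using rr norm_mult_ineq[of r r] by (simp add: Y_def power2_eq_square)
  ultimately show ?thesis by simp
qed

lemma core2:
  assumes s: "sa s" and sC: "cm s Ci"
  shows "norm (norm s ^ 2 *\<^sub>R 1 - s * s) \<le> norm s ^ 2"
proof (cases "norm s = 0")
  case True then show ?thesis by simp
next
  case False
  define m where "m = norm s"
  have m: "m > 0" using False by (simp add: m_def)
  define s' where "s' = (1/m) *\<^sub>R s"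
  have "sa s'" unfolding s'_def sa_def using adj_scaleR s[unfolded sa_def] by blast
  moreover have "cm s' Ci" unfolding s'_def by (rule cm_scaleR[OF sC])
  moreover have "norm s' \<le> 1" using m by (simp add: s'_def m_def)
  ultimately have "norm (1 - s' * s') \<le> 1" by (rule core1)
  moreover have "m ^ 2 *\<^sub>R 1 - s * s = m ^ 2 *\<^sub>R (1 - s' * s')"
    using m by (simp add: s'_def algebra_simps power2_eq_square)
  ultimately have "norm (m ^ 2 *\<^sub>R 1 - s * s) \<le> m ^ 2 * 1"
    by (simp add: mult_left_le)
  then show ?thesis by (simp add: m_def)
qed

lemma ps_sq: "sa s \<Longrightarrow> cm s Ci \<Longrightarrow> ps (s * s)"
  unfolding ps_def
  by (intro conjI sa_mult_cm cm_mult cm_refl exI[where x="norm s ^ 2"]) (auto intro: core2)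

lemma ps_add: assumes "ps X" "ps Y" shows "ps (X + Y)"
proof -
  obtain t1 where t1: "t1 \<ge> 0" "norm (t1 *\<^sub>R 1 - X) \<le> t1" using assms(1) by (auto simp: ps_def)
  obtain t2 where t2: "t2 \<ge> 0" "norm (t2 *\<^sub>R 1 - Y) \<le> t2" using assms(2) by (auto simp: ps_def)
  have eq: "(t1 + t2) *\<^sub>R 1 - (X + Y) = (t1 *\<^sub>R 1 - X) + (t2 *\<^sub>R 1 - Y)" by (simp add: algebra_simps)
  have "norm ((t1 + t2) *\<^sub>R 1 - (X + Y)) \<le> norm (t1 *\<^sub>R 1 - X) + norm (t2 *\<^sub>R 1 - Y)"
    unfolding eq by (rule norm_triangle_ineq)
  then have "norm ((t1 + t2) *\<^sub>R 1 - (X + Y)) \<le> t1 + t2" using t1 t2 by linarith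
  moreover have "sa (X + Y)" using assms unfolding ps_def sa_def by (blast intro: adj_add)
  moreover have "cm (X + Y) Ci" using assms unfolding ps_def by (blast intro: cm_add)
  ultimately show ?thesis unfolding ps_def using t1 t2 by (intro conjI exI[where x="t1+t2"]) auto
qed

lemma ps_scale: assumes "c \<ge> 0" "ps X" shows "ps (c *\<^sub>R X)"
proof -
  obtain t where t: "t \<ge> 0" "norm (t *\<^sub>R 1 - X) \<le> t" using assms(2) by (auto simp: ps_def)
  have "(c * t) *\<^sub>R 1 - c *\<^sub>R X = c *\<^sub>R (t *\<^sub>R 1 - X)" by (simp add: algebra_simps)
  then have "norm ((c * t) *\<^sub>R 1 - c *\<^sub>R X) \<le> c * t"
    using t assms(1) by (simp add: mult_left_mono)
  moreover have "sa (c *\<^sub>R X)" using assms unfolding ps_def sa_def by (blast intro: adj_scaleR)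
  moreover have "cm (c *\<^sub>R X) Ci" using assms unfolding ps_def by (blast intro: cm_scaleR)
  ultimately show ?thesis unfolding ps_def using t assms(1) by (intro conjI exI[where x="c*t"]) auto
qed

lemma ps_sqrt:
  assumes "ps X"
  shows "\<exists>W. sa W \<and> cm W Ci \<and> W * W = X \<and> (\<forall>Z. cm X Z \<longrightarrow> cm W Z) \<and> ps W"
proof -
  obtain t where t: "t \<ge> 0" "norm (t *\<^sub>R 1 - X) \<le> t" using assms by (auto simp: ps_def)
  have sX: "sa X" and cX: "cm X Ci" using assms by (auto simp: ps_def)
  show ?thesis
  proof (cases "t = 0")
    case True
    then have "X = 0" using t by simp
    then show ?thesis
      by (intro exI[where x=0]) (auto simp: sa_def adj_zero cm_zero ps_def)
  next
    case False
    then have tp: "t > 0" using t by simp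
    define Y where "Y = 1 - (1/t) *\<^sub>R X"
    have "(1/t) *\<^sub>R (t *\<^sub>R 1 - X) = ((1/t) * t) *\<^sub>R 1 - (1/t) *\<^sub>R X"
      by (simp only: scaleR_diff_right scaleR_scaleR)
    also have "\<dots> = Y" using tp by (simp add: Y_def)
    finally have "Y = (1/t) *\<^sub>R (t *\<^sub>R 1 - X)" ..
    then have nY: "norm Y \<le> 1" using t tp by (simp add: divide_le_eq_1)
    have aY: "adj Y Y" unfolding Y_def using adj_diff[OF adj_one adj_scaleR[OF sX[unfolded sa_def]]] .
    define W where "W = sqrt t *\<^sub>R sqS Y"
    have "W * W = t *\<^sub>R (sqS Y * sqS Y)" using tp by (simp add: W_def)
    also have "\<dots> = t *\<^sub>R (1 - Y)" by (simp only: sqS_sq[OF nY])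
    also have "1 - Y = (1/t) *\<^sub>R X" by (simp add: Y_def)
    also have "t *\<^sub>R ((1/t) *\<^sub>R X) = X" using tp by simp
    finally have WW: "W * W = X" .
    have sW: "sa W" unfolding W_def sa_def by (rule adj_scaleR[OF sqS_adj[OF nY aY]])
    have cW: "cm W Z" if "cm X Z" for Z
    proof -
      have "cm Y Z" unfolding Y_def by (intro cm_diff cm_one cm_scaleR that)
      then show ?thesis unfolding W_def by (intro cm_scaleR sqS_cm[OF nY])
    qed
    have "sqrt t *\<^sub>R 1 - W = sqrt t *\<^sub>R (1 - sqS Y)" by (simp add: W_def scaleR_diff_right)
    then have "norm (sqrt t *\<^sub>R 1 - W) \<le> sqrt t"
      using mult_left_le[OF sqS_dist[OF nY], of "sqrt t"] tp by simp
    then have "ps W" unfolding ps_def using sW cW[OF cX] tp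
      by (intro conjI exI[where x="sqrt t"]) auto
    then show ?thesis using sW cW cX WW by blast
  qed
qed

lemma ps_down:
  assumes "ps X" "norm X \<le> \<tau>"
  shows "norm (\<tau> *\<^sub>R 1 - X) \<le> \<tau>"
proof -
  obtain W where W: "sa W" "cm W Ci" "W * W = X" using ps_sqrt[OF assms(1)] by blast
  have nW: "norm W ^ 2 = norm X" using sa_norm_sq[OF W(1)] W(3) by simp
  have "norm (norm X *\<^sub>R 1 - X) \<le> norm X" using core2[OF W(1) W(2)] W(3) nW by simp
  moreover have eq: "\<tau> *\<^sub>R 1 - X = (\<tau> - norm X) *\<^sub>R 1 + (norm X *\<^sub>R 1 - X)" by (simp add: algebra_simps)
  moreover have "norm ((\<tau> - norm X) *\<^sub>R (1::'a endo)) \<le> \<tau> - norm X"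
    using assms(2) mult_left_le[OF norm_one_endo, of "\<tau> - norm X"] by simp
  moreover have "norm (\<tau> *\<^sub>R 1 - X) \<le> norm ((\<tau> - norm X) *\<^sub>R (1::'a endo)) + norm (norm X *\<^sub>R 1 - X)"
    unfolding eq by (rule norm_triangle_ineq)
  ultimately show ?thesis by linarith
qed

lemma ps_mono:
  assumes X: "ps X" and Y: "ps Y"
  shows "norm X \<le> norm (X + Y)"
proof -
  define t where "t = norm (X + Y)"
  have XY: "ps (X + Y)" by (rule ps_add[OF X Y])
  have d: "norm (t *\<^sub>R 1 - (X + Y)) \<le> t" unfolding t_def by (rule ps_down[OF XY]) simp
  have sa1: "sa (t *\<^sub>R 1 - (X + Y))" using XY unfolding ps_def sa_def
    by (blast intro: adj_diff adj_scaleR adj_one)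
  have cm1: "cm (t *\<^sub>R 1 - (X + Y)) Ci" using XY unfolding ps_def
    by (blast intro: cm_diff cm_scaleR cm_one)
  have t0: "t \<ge> 0" by (simp add: t_def)
  have "t *\<^sub>R 1 - (t *\<^sub>R 1 - (X + Y)) = X + Y" by simp
  then have "norm (t *\<^sub>R 1 - (t *\<^sub>R 1 - (X + Y))) \<le> t" unfolding t_def by (simp only: order_refl)
  then have "ps (t *\<^sub>R 1 - (X + Y))" unfolding ps_def using sa1 cm1 t0 by blast
  from ps_add[OF this Y] have P: "ps (t *\<^sub>R 1 - X)" by simp
  obtain W where W: "sa W" "cm W Ci" "W * W = X" "\<forall>Z. cm X Z \<longrightarrow> cm W Z" using ps_sqrt[OF X] by blast
  obtain V where V: "sa V" "cm V Ci" "V * V = t *\<^sub>R 1 - X" "\<forall>Z. cm (t *\<^sub>R 1 - X) Z \<longrightarrow> cm V Z"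
    using ps_sqrt[OF P] by blast
  have "cm W X" using W(4) cm_refl by blast
  then have "cm (t *\<^sub>R 1 - X) W" using cm_sym by (intro cm_diff cm_scaleR cm_one) blast+
  then have "cm V W" using V(4) by blast
  then have "norm W ^ 2 \<le> norm (W * W + V * V)" by (rule UT[OF W(1) V(1) W(2) V(2) cm_sym])
  also have "W * W + V * V = t *\<^sub>R 1" using W(3) V(3) by simp
  also have "norm (t *\<^sub>R (1::'a endo)) \<le> t" using t0 mult_left_le[OF norm_one_endo, of t] by simp
  finally have "norm W ^ 2 \<le> t" .
  moreover have "norm X \<le> norm W ^ 2" using W(3) norm_mult_ineq[of W W] by (simp add: power2_eq_square)
  ultimately show ?thesis by (simp add: t_def)
qed

end


context cstar begin

lemma sa_Lm: "iv a = a \<Longrightarrow> sa (Lm a)" unfolding sa_def using adj_Lm[of a] by simp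

lemma ps_hard: "ps (Lm (iv b * b))"
proof -
  define H where "H = Lm (iv b * b)"
  have sH: "sa H" unfolding H_def by (rule sa_Lm) (simp add: iv_mult)
  have cH: "cm H Ci" unfolding H_def by (rule cm_Lm_Ci)
  have HH: "H = Lm (iv b) * Lm b" unfolding H_def by (rule endo_eqI) (simp add: mult.assoc)
  have pHH: "ps (H * H)" by (rule ps_sq[OF sH cH])
  obtain X where X: "sa X" "cm X Ci" "X * X = H * H" "\<forall>Z. cm (H * H) Z \<longrightarrow> cm X Z" "ps X"
    using ps_sqrt[OF pHH] by blast
  have "cm (H * H) H" by (intro cm_mult cm_refl)
  then have cXH: "cm X H" using X(4) by blast
  then have XH: "H * X = X * H" by (simp add: cm_def)
  define V where "V = X - H"
  have sV: "sa V" unfolding V_def sa_def using X(1) sH unfolding sa_def by (rule adj_diff)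
  have cVC: "cm V Ci" unfolding V_def by (intro cm_diff X(2) cH)
  have cVX: "cm V X" unfolding V_def by (intro cm_diff cm_refl cm_sym[OF cXH])
  have "V * V = X * X - X * H - H * X + H * H" by (simp add: V_def algebra_simps)
  also have "\<dots> = 2 *\<^sub>R (H * H - X * H)" using X(3) XH by (simp add: scaleR_2 algebra_simps)
  finally have VV: "V * V = 2 *\<^sub>R (H * H - X * H)" .
  have XV: "X * V = H * H - X * H" using X(3) by (simp add: V_def algebra_simps)
  have VH: "V * H = - (X * V)" using XH XV by (simp add: V_def algebra_simps)
  obtain R where R: "sa R" "cm R Ci" "R * R = X" "\<forall>Z. cm X Z \<longrightarrow> cm R Z"
    using ps_sqrt[OF X(5)] by blast
  have cRV: "cm R V" using R(4) cm_sym[OF cVX] by blast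
  define K where "K = V * (X * V)"
  have KRV: "K = (R * V) * (R * V)"
  proof -
    have "K = V * (R * (R * V))" by (simp add: K_def R(3)[symmetric] mult.assoc)
    also have "\<dots> = (V * R) * (R * V)" by (simp add: mult.assoc)
    also have "\<dots> = (R * V) * (R * V)" using cRV by (simp add: cm_def)
    finally show ?thesis .
  qed
  have pK: "ps K" unfolding KRV by (intro ps_sq sa_mult_cm R(1) sV cRV cm_mult R(2) cVC)
  have V3: "V * V * V = 2 *\<^sub>R K"
  proof -
    have "V * V * V = V * (V * V)" by (simp add: mult.assoc)
    also have "\<dots> = V * (2 *\<^sub>R (X * V))" using VV XV by simp
    finally show ?thesis by (simp add: K_def)
  qed
  define y where "y = Lm b * V"
  define y' where "y' = V * Lm (iv b)"
  have ayy: "adj y y'" unfolding y_def y'_def using adj_mult[OF adj_Lm sV[unfolded sa_def]] .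
  have ay'y: "adj y' y" by (rule adj_sym[OF ayy])
  have cyC: "cm y Ci" unfolding y_def by (intro cm_mult cm_Lm_Ci cVC)
  have cy'C: "cm y' Ci" unfolding y'_def by (intro cm_mult cm_Lm_Ci cVC)
  have y'y: "y' * y = - K"
  proof -
    have "y' * y = V * (Lm (iv b) * Lm b) * V" by (simp add: y_def y'_def mult.assoc)
    also have "\<dots> = V * (H * V)" by (simp add: HH mult.assoc)
    also have "H * V = V * H" using cm_sym[OF cVX] cXH
      by (metis V_def cm_def cm_diff cm_refl)
    finally show ?thesis by (simp add: VH K_def)
  qed
  define h where "h = y + y'"
  define k where "k = Ci * (y - y')"
  have sh: "sa h" unfolding h_def sa_def using adj_add[OF ayy ay'y] by (simp add: add.commute)
  have "adj (Ci * (y - y')) ((y' - y) * - Ci)" by (rule adj_mult[OF adj_Ci adj_diff[OF ayy ay'y]])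
  moreover have "(y' - y) * - Ci = Ci * (y - y')"
    using cyC cy'C by (simp add: cm_def algebra_simps)
  ultimately have sk: "sa k" unfolding k_def sa_def by simp
  have ch: "cm h Ci" unfolding h_def by (intro cm_add cyC cy'C)
  have ck: "cm k Ci" unfolding k_def by (intro cm_mult cm_refl cm_diff cyC cy'C)
  have kk: "k * k = - ((y - y') * (y - y'))"
  proof -
    have "k * k = Ci * (((y - y') * Ci) * (y - y'))" by (simp add: k_def mult.assoc)
    also have "\<dots> = (Ci * Ci) * ((y - y') * (y - y'))"
      using cm_diff[OF cyC cy'C] by (simp add: cm_def mult.assoc)
    finally show ?thesis by (simp add: Ci_Ci)
  qed
  define P where "P = y * y'"
  have "h * h + k * k = 2 *\<^sub>R (y * y' + y' * y)"
    unfolding kk by (simp add: h_def scaleR_2 algebra_simps)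
  then have "2 *\<^sub>R P = h * h + k * k + 2 *\<^sub>R K" by (simp add: P_def y'y scaleR_right_diff_distrib)
  then have P2: "P = (1/2) *\<^sub>R (h * h + k * k + 2 *\<^sub>R K)"
    by (metis scaleR_2 scaleR_half_double)
  have pP: "ps P" unfolding P2 by (intro ps_scale ps_add ps_sq sh ch sk ck pK) auto
  have sP: "sa P" and cP: "cm P Ci" using pP by (auto simp: ps_def)
  define N where "N = norm y ^ 2"
  have N0: "N \<ge> 0" by (simp add: N_def)
  have nK: "norm K = N" using adj_norm_prod[OF ayy] y'y by (simp add: N_def)
  have nP: "norm P = N" using adj_norm_prod[OF ay'y] adj_norm_eq[OF ayy] by (simp add: N_def P_def)
  have d: "norm (N *\<^sub>R 1 - K) \<le> N" by (rule ps_down[OF pK]) (simp add: nK)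
  define Z where "Z = (N *\<^sub>R 1 + P) * y"
  define Z' where "Z' = y' * (N *\<^sub>R 1 + P)"
  have Zy: "Z = y * (N *\<^sub>R 1 - K)" using y'y by (simp add: Z_def P_def algebra_simps)
  have nZ: "norm Z \<le> norm y * N"
  proof -
    have "norm Z \<le> norm y * norm (N *\<^sub>R 1 - K)" unfolding Zy by (rule norm_mult_ineq)
    also have "\<dots> \<le> norm y * N" by (intro mult_left_mono d norm_ge_zero)
    finally show ?thesis .
  qed
  have sNP: "adj (N *\<^sub>R 1 + P) (N *\<^sub>R 1 + P)"
    using adj_add[OF adj_scaleR[OF adj_one] sP[unfolded sa_def]] .
  have aZ: "adj Z Z'" unfolding Z_def Z'_def by (rule adj_mult[OF sNP ayy])
  have "norm (Z * Z') \<le> norm Z * norm Z'" by (rule norm_mult_ineq)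
  also have "\<dots> = norm Z ^ 2" using adj_norm_eq[OF aZ] by (simp add: power2_eq_square)
  also have "\<dots> \<le> (norm y * N) ^ 2" by (intro power_mono nZ norm_ge_zero)
  also have "\<dots> = N * N * N" by (simp add: N_def power2_eq_square power_mult_distrib)
  finally have ZZ1: "norm (Z * Z') \<le> N * N * N" .
  have ZZ: "Z * Z' = (2 * N) *\<^sub>R (P * P) + ((N * N) *\<^sub>R P + P * P * P)"
  proof -
    have "Z * Z' = (N *\<^sub>R 1 + P) * P * (N *\<^sub>R 1 + P)" by (simp add: Z_def Z'_def P_def mult.assoc)
    also have "\<dots> = (N *\<^sub>R (P * P) + N *\<^sub>R (P * P)) + ((N * N) *\<^sub>R P + P * P * P)"
      by (simp add: algebra_simps)
    also have "N *\<^sub>R (P * P) + N *\<^sub>R (P * P) = (2 * N) *\<^sub>R (P * P)"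
      by (metis scaleR_2 scaleR_scaleR)
    finally show ?thesis .
  qed
  obtain W where W: "sa W" "cm W Ci" "W * W = P" "\<forall>Z. cm P Z \<longrightarrow> cm W Z"
    using ps_sqrt[OF pP] by blast
  have cWP: "cm W P" using W(4) cm_refl by blast
  have P3: "P * P * P = (W * P) * (W * P)"
  proof -
    have "(W * P) * (W * P) = W * (P * W) * P" by (simp add: mult.assoc)
    also have "P * W = W * P" using cWP by (simp add: cm_def)
    also have "W * (W * P) * P = (W * W) * (P * P)" by (simp add: mult.assoc)
    finally show ?thesis by (simp add: W(3) mult.assoc)
  qed
  have pT2: "ps ((2 * N) *\<^sub>R (P * P))" using N0 by (intro ps_scale ps_sq sP cP) auto
  have pT13: "ps ((N * N) *\<^sub>R P + P * P * P)"
    unfolding P3 using N0 by (intro ps_add ps_scale pP ps_sq sa_mult_cm W(1) sP cWP cm_mult W(2) cP) auto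
  have "norm ((2 * N) *\<^sub>R (P * P)) \<le> norm (Z * Z')" unfolding ZZ by (rule ps_mono[OF pT2 pT13])
  also have "norm ((2 * N) *\<^sub>R (P * P)) = 2 * N * (N * N)"
    using sa_norm_sq[OF sP] nP N0 by (simp add: power2_eq_square)
  finally have "2 * N * (N * N) \<le> N * N * N" using ZZ1 by linarith
  then have "N * N * N \<le> 0" by simp
  then have "N = 0" using N0 by (metis mult_nonneg_nonneg antisym mult_eq_0_iff)
  then have "y = 0" by (simp add: N_def)
  then have "K = 0" using y'y by simp
  then have V3z: "V * V * V = 0" using V3 by simp
  have sVV: "sa (V * V)" by (rule sa_mult_cm[OF sV sV cm_refl])
  have "norm ((V * V) * (V * V)) = norm (V * V) ^ 2" by (rule sa_norm_sq[OF sVV])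
  moreover have "(V * V) * (V * V) = V * (V * V * V)" by (simp add: mult.assoc)
  ultimately have "norm (V * V) = 0" using V3z by simp
  then have "norm V = 0" using sa_norm_sq[OF sV] by simp
  then have "X = H" by (simp add: V_def)
  then show ?thesis using X(5) by (simp add: H_def)
qed

lemma main_ineq: "norm (iv b * b) \<le> norm (iv b * b + iv c * c)"
proof -
  have "norm (Lm (iv b * b)) \<le> norm (Lm (iv b * b) + Lm (iv c * c))"
    by (rule ps_mono[OF ps_hard ps_hard])
  then show ?thesis by (simp add: norm_Lm Lm_add[symmetric])
qed

end


locale hmod = cstar A for A :: "('a::{real_normed_algebra, banach}) cstar_ops" +
  fixes H :: "('a, 'h::ab_group_add) hmod_ops"
  assumes hm: "hilbert_module A H"
begin

abbreviation ip where "ip \<equiv> hinner H"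

lemma ip_add_l_all: "\<forall>x y z. ip (x + y) z = ip x z + ip y z"
  using hm unfolding hilbert_module_def by (elim conjE) assumption
lemmas ip_add_l = ip_add_l_all[rule_format]
lemma ip_act_l_all: "\<forall>a x z. ip (hact H a x) z = a * ip x z"
  using hm unfolding hilbert_module_def by (elim conjE) assumption
lemmas ip_act_l = ip_act_l_all[rule_format]
lemma ip_sym_all: "\<forall>x y. ip x y = iv (ip y x)"
  using hm unfolding hilbert_module_def by (elim conjE) assumption
lemmas ip_sym = ip_sym_all[rule_format]
lemma ip_pos_all: "\<forall>x. cstar_positive A (ip x x)"
  using hm unfolding hilbert_module_def by (elim conjE) assumption
lemmas ip_pos = ip_pos_all[rule_format]
lemma ip_def_all: "\<forall>x. ip x x = 0 \<longrightarrow> x = 0"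
  using hm unfolding hilbert_module_def by (elim conjE) assumption
lemmas ip_definite = ip_def_all[rule_format]

lemma ip_zero_l[simp]: "ip 0 z = 0"
proof -
  have "ip (0 + 0) z = ip 0 z + ip 0 z" by (rule ip_add_l)
  then show ?thesis by simp
qed

lemma ip_minus_l: "ip (- x) z = - ip x z"
proof -
  have "ip (x + - x) z = ip x z + ip (- x) z" by (rule ip_add_l)
  then show ?thesis by (simp add: add_eq_0_iff)
qed

lemma ip_diff_l: "ip (x - y) z = ip x z - ip y z"
  using ip_add_l[of x "- y" z] by (simp add: ip_minus_l)

lemma ip_zero_r[simp]: "ip z 0 = 0" by (subst ip_sym) simp

lemma ip_add_r: "ip z (x + y) = ip z x + ip z y"
  by (subst (1 2 3) ip_sym) (simp add: ip_add_l iv_add)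

lemma ip_diff_r: "ip z (x - y) = ip z x - ip z y"
  by (subst (1 2 3) ip_sym) (simp add: ip_diff_l iv_diff)

lemma ip_act_r: "ip z (hact H a x) = ip z x * iv a"
proof -
  have "ip z (hact H a x) = iv (a * ip x z)" by (simp add: ip_sym[of z] ip_act_l)
  also have "\<dots> = iv (ip x z) * iv a" by (simp add: iv_mult)
  also have "iv (ip x z) = ip z x" by (simp add: ip_sym[of z x])
  finally show ?thesis .
qed

lemma ip_sum_r: "finite F \<Longrightarrow> ip u (\<Sum>s\<in>F. g s) = (\<Sum>s\<in>F. ip u (g s))"
  by (induction F rule: finite_induct) (auto simp: ip_add_r)

lemma orth_span:
  assumes "\<forall>j\<in>J. ip u (f j) = 0" and "s \<in> hspan H (f ` J)"
  shows "ip u s = 0" "ip s u = 0"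
proof -
  obtain F c where F: "finite F" "F \<subseteq> f ` J" "s = (\<Sum>t\<in>F. hact H (c t) t)"
    using assms(2) unfolding hspan_def by blast
  have "ip u s = (\<Sum>t\<in>F. ip u (hact H (c t) t))" unfolding F(3) by (rule ip_sum_r[OF F(1)])
  also have "\<dots> = 0" using F(2) assms(1) by (intro sum.neutral) (auto simp: ip_act_r)
  finally show "ip u s = 0" .
  then show "ip s u = 0" by (subst ip_sym) simp
qed

lemma dense_orth:
  assumes dense: "hdense H (hspan H (f ` J))" and orth: "\<forall>j\<in>J. ip u (f j) = 0"
  shows "u = 0"
proof (rule ccontr)
  assume "u \<noteq> 0"
  then have nz: "ip u u \<noteq> 0" using ip_definite by blast
  define e where "e = sqrt (norm (ip u u))"
  have e: "e > 0" using nz by (simp add: e_def)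
  obtain s where s: "s \<in> hspan H (f ` J)" "hnorm H (u - s) < e"
    using dense e unfolding hdense_def by blast
  have us: "ip u s = 0" "ip s u = 0" using orth_span[OF orth s(1)] by auto
  have "ip (u - s) (u - s) = ip u u + ip s s"
    by (simp add: ip_diff_l ip_diff_r us)
  moreover obtain b where b: "ip u u = iv b * b" using ip_pos[of u] by (auto simp: cstar_positive_def)
  moreover obtain c where c: "ip s s = iv c * c" using ip_pos[of s] by (auto simp: cstar_positive_def)
  ultimately have "norm (ip u u) \<le> norm (ip (u - s) (u - s))" using main_ineq[of b c] by (simp only:)
  also have "norm (ip (u - s) (u - s)) < e ^ 2"
  proof -
    have q: "sqrt (norm (ip (u - s) (u - s))) < e" using s(2) by (simp add: hnorm_def)
    have "sqrt (norm (ip (u - s) (u - s))) ^ 2 < e ^ 2" by (rule power_strict_mono[OF q]) auto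
    then show ?thesis by simp
  qed
  also have "e ^ 2 = norm (ip u u)" by (simp add: e_def)
  finally show False by simp
qed

end


context hmod begin

lemma proj_facts:
  assumes "orth_projection H P"
  shows "P (x + y) = P x + P y" "P (P x) = P x" "ip (P x) y = ip x (P y)"
  using assms unfolding orth_projection_def adj_op_def by auto

lemma proj_fix: "orth_projection H P \<Longrightarrow> z \<in> range P \<Longrightarrow> P z = z"
  using proj_facts(2) by blast

lemma incl:
  assumes dense: "hdense H (hspan H (f ` J))"
    and oP: "orth_projection H P" and oQ: "orth_projection H Q"
    and T: "adj_op H (range P) (range Q) T" and Tf: "\<forall>j\<in>J. T (P (f j)) = Q (f j)"
  shows "range Q \<subseteq> range P"
proof
  fix z assume z: "z \<in> range Q"
  obtain S where S: "\<forall>y\<in>range Q. S y \<in> range P"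
      "\<forall>x\<in>range P. \<forall>y\<in>range Q. ip (T x) y = ip x (S y)"
    using T unfolding adj_op_def by blast
  have Qz: "Q z = z" by (rule proj_fix[OF oQ z])
  have Sz: "S z \<in> range P" using S(1) z by blast
  have PSz: "P (S z) = S z" by (rule proj_fix[OF oP Sz])
  have "ip (z - S z) (f j) = 0" if j: "j \<in> J" for j
  proof -
    have Pf: "P (f j) \<in> range P" by blast
    have "ip z (f j) = ip (Q z) (f j)" by (simp add: Qz)
    also have "\<dots> = ip z (Q (f j))" by (rule proj_facts(3)[OF oQ])
    also have "\<dots> = ip z (T (P (f j)))" using Tf j by simp
    also have "\<dots> = iv (ip (T (P (f j))) z)" by (rule ip_sym)
    also have "ip (T (P (f j))) z = ip (P (f j)) (S z)" using S(2) Pf z by blast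
    also have "iv (ip (P (f j)) (S z)) = ip (S z) (P (f j))" by (simp add: ip_sym[of "S z"])
    also have "\<dots> = ip (P (S z)) (f j)" by (simp add: proj_facts(3)[OF oP])
    also have "\<dots> = ip (S z) (f j)" by (simp add: PSz)
    finally show ?thesis by (simp add: ip_diff_l)
  qed
  then have "z - S z = 0" using dense_orth[OF dense] by blast
  then show "z \<in> range P" using Sz by simp
qed

lemma incl2:
  assumes dense: "hdense H (hspan H (f ` J))"
    and oP: "orth_projection H P" and oQ: "orth_projection H Q"
    and U: "unitary_op H (range P) (range Q) T" and Tf: "\<forall>j\<in>J. T (P (f j)) = Q (f j)"
  shows "range P \<subseteq> range Q"
proof
  fix x assume x: "x \<in> range P"
  have Tx: "T x \<in> range Q" using U x unfolding unitary_op_def adj_op_def by blast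
  have pres: "\<forall>a\<in>range P. \<forall>b\<in>range P. ip (T a) (T b) = ip a b" using U unfolding unitary_op_def by blast
  have "ip (x - T x) (f j) = 0" if j: "j \<in> J" for j
  proof -
    have Pf: "P (f j) \<in> range P" by blast
    have "ip (T x) (f j) = ip (Q (T x)) (f j)" by (simp add: proj_fix[OF oQ Tx])
    also have "\<dots> = ip (T x) (Q (f j))" by (rule proj_facts(3)[OF oQ])
    also have "\<dots> = ip (T x) (T (P (f j)))" using Tf j by simp
    also have "\<dots> = ip x (P (f j))" using pres x Pf by blast
    also have "\<dots> = ip (P x) (f j)" by (simp add: proj_facts(3)[OF oP])
    also have "\<dots> = ip x (f j)" by (simp add: proj_fix[OF oP x])
    finally show ?thesis by (simp add: ip_diff_l)
  qed
  then have "x - T x = 0" using dense_orth[OF dense] by blast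
  then show "x \<in> range Q" using Tx by simp
qed

lemma proj_eq:
  assumes oP: "orth_projection H P" and oQ: "orth_projection H Q" and r: "range P = range Q"
  shows "P = Q"
proof
  fix x
  have QP: "Q (P y) = P y" for y using proj_fix[OF oQ] r by blast
  have PQ: "P (Q y) = Q y" for y using proj_fix[OF oP] r by blast
  have e: "ip (P x) y = ip (Q x) y" for y
  proof -
    have "ip (P x) y = ip (Q (P x)) y" by (simp add: QP)
    also have "\<dots> = ip (P x) (Q y)" by (rule proj_facts(3)[OF oQ])
    also have "\<dots> = ip x (P (Q y))" by (rule proj_facts(3)[OF oP])
    also have "\<dots> = ip x (Q y)" by (simp add: PQ)
    also have "\<dots> = ip (Q x) y" by (simp add: proj_facts(3)[OF oQ])
    finally show ?thesis .
  qed
  have "ip (P x - Q x) (P x - Q x) = 0" by (simp add: ip_diff_l e)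
  then show "P x = Q x" using ip_definite by fastforce
qed

lemma id_adj: "adj_op H M M id"
  unfolding adj_op_def by (auto intro!: exI[where x=1] exI[where x=id])

lemma id_unitary: "unitary_op H M M id"
  unfolding unitary_op_def using id_adj by auto

lemma id_inv: "invertible_op H M M id"
  unfolding invertible_op_def using id_adj[of M] by (intro conjI exI[where x=id]) auto

end

theorem proposition7p1:
  fixes A :: "('a::{real_normed_algebra, banach}) cstar_ops"
    and H :: "('a, 'h::ab_group_add) hmod_ops"
    and J :: "'j set" and f :: "'j \<Rightarrow> 'h"
    and P Q :: "'h \<Rightarrow> 'h"
  assumes "cstar_algebra A"
    and "hilbert_module A H"
    and "countably_generated H"
    and "hilbert_basis H J f"
    and "orthogonal_family H J f"
    and "orth_projection H P"
    and "orth_projection H Q"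
    and "std_nt_frame H (range P) J (\<lambda>j. P (f j))"
    and "std_nt_frame H (range Q) J (\<lambda>j. Q (f j))"
  shows "(similar_frames H (range P) (range Q) J (\<lambda>j. P (f j)) (\<lambda>j. Q (f j)) \<longleftrightarrow>
          unitarily_equiv_frames H (range P) (range Q) J (\<lambda>j. P (f j)) (\<lambda>j. Q (f j))) \<and>
         (unitarily_equiv_frames H (range P) (range Q) J (\<lambda>j. P (f j)) (\<lambda>j. Q (f j)) \<longleftrightarrow>
          (P = Q \<and> (\<forall>j\<in>J. P (f j) = Q (f j))))"
proof -
  interpret hmod A H
    by (rule hmod.intro[OF cstar.intro[OF assms(1)] hmod_axioms.intro[OF assms(2)]])
  have dense: "hdense H (hspan H (f ` J))" using assms(4) by (simp add: hilbert_basis_def)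
  note oP = assms(6) and oQ = assms(7)
  have sim: "P = Q" if sf: "similar_frames H (range P) (range Q) J (\<lambda>j. P (f j)) (\<lambda>j. Q (f j))"
  proof -
    obtain T where T: "invertible_op H (range P) (range Q) T" "\<forall>j\<in>J. T (P (f j)) = Q (f j)"
      using sf unfolding similar_frames_def by blast
    obtain S where S: "adj_op H (range Q) (range P) S" "\<forall>x\<in>range P. S (T x) = x"
      using T(1) unfolding invertible_op_def by blast
    have TA: "adj_op H (range P) (range Q) T" using T(1) unfolding invertible_op_def by blast
    have Sf: "\<forall>j\<in>J. S (Q (f j)) = P (f j)" using T(2) S(2) by (metis rangeI)
    have "range Q \<subseteq> range P" by (rule incl[OF dense oP oQ TA T(2)])
    moreover have "range P \<subseteq> range Q" by (rule incl[OF dense oQ oP S(1) Sf])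
    ultimately show ?thesis using proj_eq[OF oP oQ] by blast
  qed
  have uni: "P = Q" if uf: "unitarily_equiv_frames H (range P) (range Q) J (\<lambda>j. P (f j)) (\<lambda>j. Q (f j))"
  proof -
    obtain T where T: "unitary_op H (range P) (range Q) T" "\<forall>j\<in>J. T (P (f j)) = Q (f j)"
      using uf unfolding unitarily_equiv_frames_def by blast
    have TA: "adj_op H (range P) (range Q) T" using T(1) unfolding unitary_op_def by blast
    have "range Q \<subseteq> range P" by (rule incl[OF dense oP oQ TA T(2)])
    moreover have "range P \<subseteq> range Q" by (rule incl2[OF dense oP oQ T(1) T(2)])
    ultimately show ?thesis using proj_eq[OF oP oQ] by blast
  qed
  have eq_sim: "similar_frames H (range P) (range Q) J (\<lambda>j. P (f j)) (\<lambda>j. Q (f j))" if "P = Q"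
    unfolding similar_frames_def using that id_inv by (intro exI[where x=id]) auto
  have eq_uni: "unitarily_equiv_frames H (range P) (range Q) J (\<lambda>j. P (f j)) (\<lambda>j. Q (f j))" if "P = Q"
    unfolding unitarily_equiv_frames_def using that id_unitary by (intro exI[where x=id]) auto
  show ?thesis using sim uni eq_sim eq_uni by blast
qed

end
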